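(* Let $n,m\ge1$ and fix parameters $\alpha_k>0$, $v_k\in\mathbb{S}^{n-1}$, $b_k\in\mathbb{R}$, $k=1,\dots,m$. For $K<0$ and $x$ in the relevant model, let $u_k(x)=-\alpha_kB^{v_k}(x)+b_k$. (Poincaré) Fix $x\in\mathbb{R}^n$ (which lies in $\mathbb{P}^n_K$ for $|K|$ small) and let $y=\frac{\omega}{1+\sqrt{1-K\|\omega\|^2}}\in\mathbb{P}^m_K$ with $\omega_k=\frac{\sinh(\sqrt{-K}u_k(x))}{\sqrt{-K}}$. Then as $K\to0^-$, $y_k\to\alpha_k\langle v_k,x\rangle+\tfrac12 b_k$ for each $k$. (Lorentz) Fix $x_s\in\mathbb{R}^n$, let $x=[x_t,x_s^\top]^\top\in\mathbb{L}^n_K$ with $x_t=\sqrt{-1/K+\|x_s\|^2}$, and let $y_s=\frac{1}{\sqrt{-K}}\sinh(\sqrt{-K}\,u(x))$ (entrywise), $y_t=\sqrt{-1/K+\|y_s\|^2}$. Then as $K\to0^-$, $(y_s)_k\to\alpha_k\langle v_k,x_s\rangle+b_k$ for each $k$.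
   Context: $\mathbb{P}^n_K=\{x\in\mathbb{R}^n:\|x\|^2<-1/K\}$ with Busemann function $B^v(x)=\frac{1}{\sqrt{-K}}\log\frac{\|v-\sqrt{-K}x\|^2}{1+K\|x\|^2}$; $\mathbb{L}^n_K=\{x=[x_t,x_s^\top]^\top\in\mathbb{R}^{n+1}:-x_t^2+\|x_s\|^2=1/K,\ x_t>0\}$ with Busemann function $B^v(x)=\frac{1}{\sqrt{-K}}\log(\sqrt{-K}(x_t-\langle x_s,v\rangle))$; $\mathbb{S}^{n-1}$ is the Euclidean unit sphere and $u(x)=(u_1(x),\dots,u_m(x))^\top$. *)

theory Defs
  imports "HOL-Analysis.Analysis"
begin

definition busemann_P :: "real \<Rightarrow> real^'n \<Rightarrow> real^'n \<Rightarrow> real" where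
  "busemann_P K v x =
     (1 / sqrt (-K)) * ln ((norm (v - sqrt (-K) *\<^sub>R x))\<^sup>2 / (1 + K * (norm x)\<^sup>2))"

text \<open>Busemann function of the Lorentz (hyperboloid) model; a point is (x_t, x_s).\<close>
definition busemann_L :: "real \<Rightarrow> real^'n \<Rightarrow> real \<times> (real^'n) \<Rightarrow> real" where
  "busemann_L K v x = (1 / sqrt (-K)) * ln (sqrt (-K) * (fst x - inner (snd x) v))"

definition u_P :: "real \<Rightarrow> ('m \<Rightarrow> real) \<Rightarrow> ('m \<Rightarrow> real^'n) \<Rightarrow> ('m \<Rightarrow> real)
                   \<Rightarrow> real^'n \<Rightarrow> 'm \<Rightarrow> real" where
  "u_P K \<alpha> v b x k = - \<alpha> k * busemann_P K (v k) x + b k"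

definition u_L :: "real \<Rightarrow> ('m \<Rightarrow> real) \<Rightarrow> ('m \<Rightarrow> real^'n) \<Rightarrow> ('m \<Rightarrow> real)
                   \<Rightarrow> real \<times> (real^'n) \<Rightarrow> 'm \<Rightarrow> real" where
  "u_L K \<alpha> v b x k = - \<alpha> k * busemann_L K (v k) x + b k"

definition omega_P :: "real \<Rightarrow> ('m::finite \<Rightarrow> real) \<Rightarrow> ('m \<Rightarrow> real^'n) \<Rightarrow> ('m \<Rightarrow> real)
                   \<Rightarrow> real^'n \<Rightarrow> real^'m" where
  "omega_P K \<alpha> v b x = (\<chi> k. sinh (sqrt (-K) * u_P K \<alpha> v b x k) / sqrt (-K))"

definition y_P :: "real \<Rightarrow> ('m::finite \<Rightarrow> real) \<Rightarrow> ('m \<Rightarrow> real^'n) \<Rightarrow> ('m \<Rightarrow> real)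
                   \<Rightarrow> real^'n \<Rightarrow> real^'m" where
  "y_P K \<alpha> v b x = (1 / (1 + sqrt (1 - K * (norm (omega_P K \<alpha> v b x))\<^sup>2))) *\<^sub>R omega_P K \<alpha> v b x"

definition lift_L :: "real \<Rightarrow> real^'n \<Rightarrow> real \<times> (real^'n)" where
  "lift_L K xs = (sqrt (-1/K + (norm xs)\<^sup>2), xs)"

definition ys_L :: "real \<Rightarrow> ('m::finite \<Rightarrow> real) \<Rightarrow> ('m \<Rightarrow> real^'n) \<Rightarrow> ('m \<Rightarrow> real)
                   \<Rightarrow> real^'n \<Rightarrow> real^'m" where
  "ys_L K \<alpha> v b xs = (\<chi> k. sinh (sqrt (-K) * u_L K \<alpha> v b (lift_L K xs) k) / sqrt (-K))"

end

theory Submission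
  imports Defs
begin

lemma quot_lim:
  assumes "(f has_real_derivative D) (at 0)" "f 0 = 0"
  shows "((\<lambda>s. f s / s) \<longlongrightarrow> D) (at 0)"
  using assms(1) unfolding has_field_derivative_iff by (simp add: assms(2))

lemma quot_lim_right:
  assumes "(f has_real_derivative D) (at 0)" "f 0 = 0"
  shows "((\<lambda>s. f s / s) \<longlongrightarrow> D) (at_right 0)"
  using tendsto_mono[OF at_le[OF subset_UNIV] quot_lim[OF assms]] by simp

definition sinhc :: "real \<Rightarrow> real" where
  "sinhc z = (if z = 0 then 1 else sinh z / z)"

lemma isCont_sinhc: "isCont sinhc 0"
proof -
  have "((\<lambda>z. sinh z / z) \<longlongrightarrow> 1) (at (0::real))"
  proof (rule quot_lim)
    show "(sinh has_real_derivative 1) (at 0)"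
      using DERIV_chain2[OF has_field_derivative_sinh[of "\<lambda>x. x" 1 0] DERIV_ident] by simp
  qed simp
  moreover have "\<forall>\<^sub>F z in at (0::real). sinh z / z = sinhc z"
    unfolding sinhc_def eventually_at by (auto intro: exI[of _ 1])
  ultimately have "(sinhc \<longlongrightarrow> 1) (at 0)" using tendsto_cong by fastforce
  then show ?thesis unfolding isCont_def sinhc_def by simp
qed

lemma sinh_lim:
  assumes "(u \<longlongrightarrow> u0) (at_right (0::real))"
  shows "((\<lambda>s. sinh (s * u s) / s) \<longlongrightarrow> u0) (at_right 0)"
proof -
  have "((\<lambda>s. s * u s) \<longlongrightarrow> 0 * u0) (at_right (0::real))"
    by (intro tendsto_mult tendsto_ident_at assms)
  then have "((\<lambda>s. sinhc (s * u s)) \<longlongrightarrow> sinhc 0) (at_right (0::real))"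
    using isCont_tendsto_compose[OF isCont_sinhc] by simp
  then have "((\<lambda>s. u s * sinhc (s * u s)) \<longlongrightarrow> u0 * sinhc 0) (at_right (0::real))"
    by (intro tendsto_mult assms)
  then have "((\<lambda>s. u s * sinhc (s * u s)) \<longlongrightarrow> u0) (at_right (0::real))"
    by (simp add: sinhc_def)
  moreover have "\<forall>\<^sub>F s in at_right (0::real). u s * sinhc (s * u s) = sinh (s * u s) / s"
    using eventually_at_right_less[of "0::real"]
    by eventually_elim (auto simp: sinhc_def)
  ultimately show ?thesis using tendsto_cong by fastforce
qed

lemma eventually_at_left_neg: "\<forall>\<^sub>F K in at_left (0::real). K < 0"
  by (simp add: eventually_at_filter)

lemma subst_lim:
  assumes "((\<lambda>s. F (-(s^2))) \<longlongrightarrow> L) (at_right (0::real))"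
  shows "(F \<longlongrightarrow> L) (at_left 0)"
proof -
  have f: "filterlim (\<lambda>K. sqrt (-K)) (at_right 0) (at_left (0::real))"
    unfolding filterlim_at
  proof
    show "\<forall>\<^sub>F K in at_left (0::real). sqrt (- K) \<in> {0<..} \<and> sqrt (- K) \<noteq> 0"
      using eventually_at_left_neg by eventually_elim auto
    have "((\<lambda>K. sqrt (-K)) \<longlongrightarrow> sqrt (-0)) (at_left (0::real))"
      by (intro tendsto_intros)
    then show "((\<lambda>K. sqrt (-K)) \<longlongrightarrow> 0) (at_left (0::real))" by simp
  qed
  have "((\<lambda>K. F (-((sqrt (-K))^2))) \<longlongrightarrow> L) (at_left 0)"
    using filterlim_compose[OF assms f] by (simp add: o_def)
  moreover have "\<forall>\<^sub>F K in at_left (0::real). F (-((sqrt (-K))^2)) = F K"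
    using eventually_at_left_neg by eventually_elim auto
  ultimately show ?thesis using tendsto_cong by fastforce
qed

lemma norm_diff_sq:
  fixes v x :: "real^'n"
  assumes "norm v = 1"
  shows "(norm (v - s *\<^sub>R x))\<^sup>2 = 1 - 2 * s * inner v x + s\<^sup>2 * (norm x)\<^sup>2"
proof -
  have vv: "inner v v = 1" using assms by (simp add: power2_norm_eq_inner[symmetric])
  have xx: "inner x x = (norm x)\<^sup>2" by (simp add: power2_norm_eq_inner)
  have "(norm (v - s *\<^sub>R x))\<^sup>2 = inner (v - s *\<^sub>R x) (v - s *\<^sub>R x)"
    by (rule power2_norm_eq_inner)
  also have "\<dots> = inner v v - 2 * s * inner v x + s\<^sup>2 * inner x x"
    by (simp add: inner_diff_left inner_diff_right inner_commute algebra_simps power2_eq_square)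
  finally show ?thesis using vv xx by simp
qed

lemma busP_lim:
  fixes v x :: "real^'n"
  assumes "norm v = 1"
  shows "((\<lambda>s. busemann_P (-(s\<^sup>2)) v x) \<longlongrightarrow> -2 * inner v x) (at_right 0)"
proof -
  define a where "a = inner v x"
  define c where "c = (norm x)\<^sup>2"
  have d: "((\<lambda>s. ln ((1 - 2 * s * a + s\<^sup>2 * c)/(1 - s\<^sup>2*c))) has_real_derivative (-2*a)) (at 0)"
    by (auto intro!: derivative_eq_intros)
  have l: "((\<lambda>s. ln ((1 - 2 * s * a + s\<^sup>2 * c)/(1 - s\<^sup>2*c)) / s) \<longlongrightarrow> -2*a) (at_right 0)"
    by (rule quot_lim_right[OF d]) simp
  have "\<forall>\<^sub>F s in at_right (0::real). ln ((1 - 2 * s * a + s\<^sup>2 * c)/(1 - s\<^sup>2*c)) / s = busemann_P (-(s\<^sup>2)) v x"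
    using eventually_at_right_less[of "0::real"]
    by eventually_elim (simp add: busemann_P_def norm_diff_sq[OF assms] a_def c_def)
  with l show ?thesis using tendsto_cong a_def by fastforce
qed

lemma busL_lim:
  fixes v xs :: "real^'n"
  shows "((\<lambda>s. busemann_L (-(s\<^sup>2)) v (lift_L (-(s\<^sup>2)) xs)) \<longlongrightarrow> - inner xs v) (at_right 0)"
proof -
  define a where "a = inner xs v"
  define c where "c = (norm xs)\<^sup>2"
  have d: "((\<lambda>s. ln (sqrt (1 + s\<^sup>2*c) - s*a)) has_real_derivative (-a)) (at 0)"
    by (auto intro!: derivative_eq_intros)
  have l: "((\<lambda>s. ln (sqrt (1 + s\<^sup>2*c) - s*a) / s) \<longlongrightarrow> -a) (at_right 0)"
    by (rule quot_lim_right[OF d]) simp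
  have "\<forall>\<^sub>F s in at_right (0::real). ln (sqrt (1 + s\<^sup>2*c) - s*a) / s = busemann_L (-(s\<^sup>2)) v (lift_L (-(s\<^sup>2)) xs)"
    using eventually_at_right_less[of "0::real"]
  proof eventually_elim
    case (elim s)
    have "s * sqrt (1/s\<^sup>2 + c) = sqrt (1 + s\<^sup>2*c)"
    proof -
      have "1/s\<^sup>2 + c = (1 + s\<^sup>2*c) / s\<^sup>2" using elim by (simp add: field_simps)
      then have "sqrt (1/s\<^sup>2 + c) = sqrt (1 + s\<^sup>2*c) / s"
        using elim by (simp add: real_sqrt_divide)
      then show ?thesis using elim by simp
    qed
    then show ?case using elim
      by (simp add: busemann_L_def lift_L_def a_def c_def right_diff_distrib)
  qed
  with l show ?thesis using tendsto_cong a_def by fastforce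
qed

lemma omegaP_lim:
  fixes \<alpha> :: "'m::finite \<Rightarrow> real" and v :: "'m \<Rightarrow> real^'n" and b :: "'m \<Rightarrow> real"
  assumes "\<And>k. norm (v k) = 1"
  shows "((\<lambda>s. omega_P (-(s\<^sup>2)) \<alpha> v b x) \<longlongrightarrow> (\<chi> j. 2 * \<alpha> j * inner (v j) x + b j)) (at_right 0)"
  unfolding omega_P_def
proof (intro tendsto_vec_lambda)
  fix j
  have u: "((\<lambda>s. u_P (-(s\<^sup>2)) \<alpha> v b x j) \<longlongrightarrow> 2 * \<alpha> j * inner (v j) x + b j) (at_right 0)"
  proof -
    have "((\<lambda>s. - \<alpha> j * busemann_P (-(s\<^sup>2)) (v j) x + b j) \<longlongrightarrow> - \<alpha> j * (-2 * inner (v j) x) + b j) (at_right 0)"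
      by (intro tendsto_intros busP_lim assms)
    then show ?thesis by (simp add: u_P_def mult_ac)
  qed
  have "\<forall>\<^sub>F s in at_right (0::real). sinh (s * u_P (-(s\<^sup>2)) \<alpha> v b x j) / s =
      sinh (sqrt (-(-(s\<^sup>2))) * u_P (-(s\<^sup>2)) \<alpha> v b x j) / sqrt (-(-(s\<^sup>2)))"
    using eventually_at_right_less[of "0::real"] by eventually_elim simp
  with sinh_lim[OF u] show "((\<lambda>s. sinh (sqrt (-(-(s\<^sup>2))) * u_P (-(s\<^sup>2)) \<alpha> v b x j) / sqrt (-(-(s\<^sup>2))))
      \<longlongrightarrow> 2 * \<alpha> j * inner (v j) x + b j) (at_right 0)"
    using tendsto_cong by fastforce
qed

lemma yP_lim:
  fixes \<alpha> :: "'m::finite \<Rightarrow> real" and v :: "'m \<Rightarrow> real^'n" and b :: "'m \<Rightarrow> real"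
  assumes "\<And>k. norm (v k) = 1"
  shows "((\<lambda>K. y_P K \<alpha> v b x $ k) \<longlongrightarrow> \<alpha> k * inner (v k) x + b k / 2) (at_left 0)"
proof (rule subst_lim)
  define w0 where "w0 = (\<chi> j. 2 * \<alpha> j * inner (v j) x + b j)"
  have o: "((\<lambda>s. omega_P (-(s\<^sup>2)) \<alpha> v b x) \<longlongrightarrow> w0) (at_right 0)"
    unfolding w0_def by (rule omegaP_lim[OF assms])
  have "((\<lambda>s. (1 / (1 + sqrt (1 - (-(s\<^sup>2)) * (norm (omega_P (-(s\<^sup>2)) \<alpha> v b x))\<^sup>2))) * (omega_P (-(s\<^sup>2)) \<alpha> v b x $ k))
     \<longlongrightarrow> (1 / (1 + sqrt (1 - (-(0\<^sup>2)) * (norm w0)\<^sup>2))) * (w0 $ k)) (at_right 0)"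
    by (intro tendsto_intros o) auto
  then show "((\<lambda>s. y_P (-(s\<^sup>2)) \<alpha> v b x $ k) \<longlongrightarrow> \<alpha> k * inner (v k) x + b k / 2) (at_right 0)"
    by (simp add: y_P_def w0_def field_simps)
qed

lemma ysL_lim:
  fixes \<alpha> :: "'m::finite \<Rightarrow> real" and v :: "'m \<Rightarrow> real^'n" and b :: "'m \<Rightarrow> real"
  shows "((\<lambda>K. ys_L K \<alpha> v b xs $ k) \<longlongrightarrow> \<alpha> k * inner (v k) xs + b k) (at_left 0)"
proof (rule subst_lim)
  have u: "((\<lambda>s. u_L (-(s\<^sup>2)) \<alpha> v b (lift_L (-(s\<^sup>2)) xs) k) \<longlongrightarrow> \<alpha> k * inner (v k) xs + b k) (at_right 0)"
  proof -
    have "((\<lambda>s. - \<alpha> k * busemann_L (-(s\<^sup>2)) (v k) (lift_L (-(s\<^sup>2)) xs) + b k) \<longlongrightarrow> - \<alpha> k * (- inner xs (v k)) + b k) (at_right 0)"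
      by (intro tendsto_intros busL_lim)
    then show ?thesis by (simp add: u_L_def inner_commute)
  qed
  have "\<forall>\<^sub>F s in at_right (0::real). sinh (s * u_L (-(s\<^sup>2)) \<alpha> v b (lift_L (-(s\<^sup>2)) xs) k) / s =
      ys_L (-(s\<^sup>2)) \<alpha> v b xs $ k"
    using eventually_at_right_less[of "0::real"] by eventually_elim (simp add: ys_L_def)
  with sinh_lim[OF u] show "((\<lambda>s. ys_L (-(s\<^sup>2)) \<alpha> v b xs $ k) \<longlongrightarrow> \<alpha> k * inner (v k) xs + b k) (at_right 0)"
    using tendsto_cong by fastforce
qed

theorem theorem5:
  fixes \<alpha> :: "'m::finite \<Rightarrow> real" and v :: "'m \<Rightarrow> real^'n" and b :: "'m \<Rightarrow> real"
  assumes "\<And>k. \<alpha> k > 0"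
    and "\<And>k. norm (v k) = 1"
  shows "(\<forall>(x::real^'n) k. ((\<lambda>K. y_P K \<alpha> v b x $ k) \<longlongrightarrow> \<alpha> k * inner (v k) x + b k / 2) (at_left 0))
       \<and> (\<forall>(xs::real^'n) k. ((\<lambda>K. ys_L K \<alpha> v b xs $ k) \<longlongrightarrow> \<alpha> k * inner (v k) xs + b k) (at_left 0))"
  using yP_lim[of v \<alpha> b, OF assms(2)] ysL_lim[of \<alpha> v b] by blast

end
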